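(* Let $b\in\mathcal E_1$ with $b(t)=1+\phi(t)$, $\phi$ flat at $0$. Let $\theta$ be the inverse germ of $t\mapsto t\,b(t)$, write $\theta(x)=x\,c(x)$ (so $c\in\mathcal E_1$ and $c-1$ is flat at $0$), and set $\sigma(x)=\theta(x)^4$, $\sigma^0=\mathrm{id}$, $\sigma^n=\sigma\circ\sigma^{n-1}$. Then the infinite product $$\Big(\prod_{n=0}^{\infty}c(\sigma^n(x))^{1/4^n}\Big)^{1/2}$$ converges on a neighbourhood of $0$ and defines a $C^\infty$ function there.
   Context: $\mathcal E_1$ denotes the ring of smooth function germs at $0\in\mathbb R$. A function germ is flat at $0$ if all its derivatives (including its value) vanish at $0$. *)

theory Defs
  imports "HOL-Analysis.Analysis"
begin

definition smooth_on :: "real set \<Rightarrow> (real \<Rightarrow> real) \<Rightarrow> bool" where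
  "smooth_on U f \<longleftrightarrow> (\<forall>k. \<forall>x\<in>U. ((deriv ^^ k) f) differentiable (at x))"

definition flat_at_0 :: "(real \<Rightarrow> real) \<Rightarrow> bool" where
  "flat_at_0 f \<longleftrightarrow> (\<forall>k. (deriv ^^ k) f 0 = 0)"

end

theory Submission
  imports Defs
begin


definition ds :: "nat \<Rightarrow> real set \<Rightarrow> (real \<Rightarrow> real) \<Rightarrow> bool" where
  "ds k S f \<longleftrightarrow> (\<forall>j\<le>k. \<forall>x\<in>S. ((deriv ^^ j) f) differentiable (at x))"

lemma smooth_ds: "smooth_on S f \<longleftrightarrow> (\<forall>k. ds k S f)"
  unfolding smooth_on_def ds_def by blast

lemma ds_mono: "ds k S f \<Longrightarrow> j \<le> k \<Longrightarrow> ds j S f"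
  unfolding ds_def by auto

lemma dsD: "ds k S f \<Longrightarrow> j \<le> k \<Longrightarrow> x \<in> S \<Longrightarrow> ((deriv ^^ j) f) differentiable (at x)"
  unfolding ds_def by blast

lemma D_local:
  assumes "open S" "\<And>y. y \<in> S \<Longrightarrow> f y = g y" "x \<in> S"
  shows "(deriv ^^ k) f x = (deriv ^^ k) g x"
  using assms(3)
proof (induction k arbitrary: x)
  case 0 then show ?case using assms by simp
next
  case (Suc k)
  have "eventually (\<lambda>y. y \<in> S) (nhds x)" using assms(1) Suc.prems by (rule eventually_nhds_in_open)
  then have "eventually (\<lambda>y. (deriv ^^ k) f y = (deriv ^^ k) g y) (nhds x)"
    by (rule eventually_mono) (use Suc.IH in auto)
  then show ?case by (simp add: deriv_cong_ev)
qed

lemma deriv_local: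
  assumes "open S" "\<And>y. y \<in> S \<Longrightarrow> f y = g y" "x \<in> S"
  shows "deriv f x = deriv g x"
proof -
  have "(deriv ^^ Suc 0) f x = (deriv ^^ Suc 0) g x"
    by (rule D_local[OF assms(1) _ assms(3)]) (erule assms(2))
  then show ?thesis by (simp only: funpow.simps comp_apply id_apply)
qed

lemma D_Suc: "(deriv ^^ Suc k) f x = deriv ((deriv ^^ k) f) x"
  by (simp only: funpow.simps comp_apply)

lemma diff_local:
  fixes f g :: "real \<Rightarrow> real"
  assumes "open S" "\<And>y. y \<in> S \<Longrightarrow> f y = g y" "x \<in> S" "g differentiable (at x)"
  shows "f differentiable (at x)"
proof -
  from assms(4) obtain d where "(g has_real_derivative d) (at x)"
    using real_differentiable_def by blast
  then have "(f has_real_derivative d) (at x)"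
    by (rule has_field_derivative_transform_within_open[OF _ assms(1,3)]) (use assms(2) in auto)
  then show ?thesis using real_differentiable_def by blast
qed

lemma ds_local:
  assumes "open S" "\<And>y. y \<in> S \<Longrightarrow> f y = g y" "ds k S g"
  shows "ds k S f"
  unfolding ds_def
proof (intro allI impI ballI)
  fix j x assume "j \<le> k" "x \<in> S"
  show "(deriv ^^ j) f differentiable (at x)"
    by (rule diff_local[OF assms(1) _ \<open>x\<in>S\<close> dsD[OF assms(3) \<open>j\<le>k\<close> \<open>x\<in>S\<close>]])
       (rule D_local[OF assms(1)], erule assms(2), assumption)
qed

lemma smooth_local:
  assumes "open S" "\<And>y. y \<in> S \<Longrightarrow> f y = g y" "smooth_on S g"
  shows "smooth_on S f"
  unfolding smooth_ds
proof
  fix k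
  from assms(3) have "ds k S g" unfolding smooth_ds by blast
  then show "ds k S f" by (rule ds_local[OF assms(1), rotated]) (erule assms(2))
qed

lemma D_Suc_right: "(deriv ^^ Suc k) f = (deriv ^^ k) (deriv f)"
  by (simp add: funpow_Suc_right del: funpow.simps)

lemma ds_deriv: "ds (Suc k) S f \<Longrightarrow> ds k S (deriv f)"
proof (unfold ds_def, intro allI impI ballI)
  fix j x assume a: "\<forall>j\<le>Suc k. \<forall>x\<in>S. (deriv ^^ j) f differentiable at x" and j: "j \<le> k" and x: "x \<in> S"
  from j have "Suc j \<le> Suc k" by simp
  with a x have "(deriv ^^ Suc j) f differentiable at x" by blast
  then show "(deriv ^^ j) (deriv f) differentiable at x" by (simp only: D_Suc_right)
qed

lemma smooth_deriv: "smooth_on S f \<Longrightarrow> smooth_on S (deriv f)"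
  unfolding smooth_ds by (blast intro: ds_deriv)

lemma ds_has_deriv: "ds k S f \<Longrightarrow> x \<in> S \<Longrightarrow> (f has_real_derivative deriv f x) (at x)"
  using dsD[of k S f 0 x] by (simp add: DERIV_deriv_iff_real_differentiable)

lemma ds_D_has_deriv: "ds k S f \<Longrightarrow> j < k \<Longrightarrow> x \<in> S \<Longrightarrow>
   ((deriv ^^ j) f has_real_derivative (deriv ^^ Suc j) f x) (at x)"
  using dsD[of k S f j x] by (simp add: DERIV_deriv_iff_real_differentiable)

lemma ds_cont: "ds k S f \<Longrightarrow> j \<le> k \<Longrightarrow> x \<in> S \<Longrightarrow> isCont ((deriv ^^ j) f) x"
  using dsD[of k S f j x] by (simp add: differentiable_imp_continuous_within)

lemma ds_SucI:
  assumes "open S" "\<And>x. x \<in> S \<Longrightarrow> (f has_real_derivative f' x) (at x)" "ds k S f'"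
  shows "ds (Suc k) S f"
  unfolding ds_def
proof (intro allI impI ballI)
  fix j x assume j: "j \<le> Suc k" and x: "x \<in> S"
  show "(deriv ^^ j) f differentiable (at x)"
  proof (cases j)
    case 0 then show ?thesis using assms(2)[OF x] real_differentiable_def by auto
  next
    case (Suc i)
    have dd: "deriv f y = f' y" if "y \<in> S" for y by (rule DERIV_imp_deriv[OF assms(2)[OF that]])
    have e: "(deriv ^^ j) f x' = (deriv ^^ i) f' x'" if "x' \<in> S" for x'
      unfolding Suc D_Suc_right by (rule D_local[OF assms(1) _ that]) (erule dd)
    have "(deriv ^^ i) f' differentiable (at x)"
      by (rule dsD[OF assms(3) _ x]) (use j Suc in simp)
    then show ?thesis
      by (rule diff_local[OF assms(1) _ x, rotated]) (erule e)
  qed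
qed

lemma D_add:
  assumes "open S" "ds k S f" "ds k S g" "x \<in> S"
  shows "(deriv ^^ k) (\<lambda>y. f y + g y) x = (deriv ^^ k) f x + (deriv ^^ k) g x"
  using assms(2-4)
proof (induction k arbitrary: x)
  case 0 then show ?case by simp
next
  case (Suc k)
  have dk: "ds k S f" "ds k S g" by (rule ds_mono[OF Suc.prems(1)], simp, rule ds_mono[OF Suc.prems(2)], simp)
  have e: "(deriv ^^ k) (\<lambda>y. f y + g y) y = (deriv ^^ k) f y + (deriv ^^ k) g y" if "y \<in> S" for y
    by (rule Suc.IH[OF dk that])
  have "(deriv ^^ Suc k) (\<lambda>y. f y + g y) x = deriv ((deriv ^^ k) (\<lambda>y. f y + g y)) x"
    by (rule D_Suc)
  also have "\<dots> = deriv (\<lambda>y. (deriv ^^ k) f y + (deriv ^^ k) g y) x"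
    by (rule deriv_local[OF assms(1) _ Suc.prems(3)]) (erule e)
  also have "\<dots> = (deriv ^^ Suc k) f x + (deriv ^^ Suc k) g x"
    by (rule DERIV_imp_deriv[OF DERIV_add[OF ds_D_has_deriv[OF Suc.prems(1) lessI Suc.prems(3)]
        ds_D_has_deriv[OF Suc.prems(2) lessI Suc.prems(3)]]])
  finally show ?case .
qed

lemma D_cmult:
  assumes "open S" "ds k S f" "x \<in> S"
  shows "(deriv ^^ k) (\<lambda>y. a * f y) x = a * (deriv ^^ k) f x"
  using assms(2-3)
proof (induction k arbitrary: x)
  case 0 then show ?case by simp
next
  case (Suc k)
  have dk: "ds k S f" by (rule ds_mono[OF Suc.prems(1)]) simp
  have e: "(deriv ^^ k) (\<lambda>y. a * f y) y = a * (deriv ^^ k) f y" if "y \<in> S" for y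
    by (rule Suc.IH[OF dk that])
  have "(deriv ^^ Suc k) (\<lambda>y. a * f y) x = deriv ((deriv ^^ k) (\<lambda>y. a * f y)) x"
    by (rule D_Suc)
  also have "\<dots> = deriv (\<lambda>y. a * (deriv ^^ k) f y) x"
    by (rule deriv_local[OF assms(1) _ Suc.prems(2)]) (erule e)
  also have "\<dots> = a * (deriv ^^ Suc k) f x"
    by (rule DERIV_imp_deriv[OF DERIV_cmult[OF ds_D_has_deriv[OF Suc.prems(1) lessI Suc.prems(2)]]])
  finally show ?case .
qed

lemma ds_add:
  assumes "open S" "ds k S f" "ds k S g"
  shows "ds k S (\<lambda>y. f y + g y)"
  unfolding ds_def
proof (intro allI impI ballI)
  fix j x assume j: "j \<le> k" and x: "x \<in> S"
  have e: "(deriv ^^ j) (\<lambda>y. f y + g y) y = (deriv ^^ j) f y + (deriv ^^ j) g y" if "y \<in> S" for y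
    by (rule D_add[OF assms(1) ds_mono[OF assms(2) j] ds_mono[OF assms(3) j] that])
  have "(\<lambda>y. (deriv ^^ j) f y + (deriv ^^ j) g y) differentiable (at x)"
    by (rule differentiable_add[OF dsD[OF assms(2) j x] dsD[OF assms(3) j x]])
  then show "(deriv ^^ j) (\<lambda>y. f y + g y) differentiable (at x)"
    by (rule diff_local[OF assms(1) _ x, rotated]) (erule e)
qed

lemma ds_cmult:
  assumes "open S" "ds k S f"
  shows "ds k S (\<lambda>y. a * f y)"
  unfolding ds_def
proof (intro allI impI ballI)
  fix j x assume j: "j \<le> k" and x: "x \<in> S"
  have e: "(deriv ^^ j) (\<lambda>y. a * f y) y = a * (deriv ^^ j) f y" if "y \<in> S" for y
    by (rule D_cmult[OF assms(1) ds_mono[OF assms(2) j] that])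
  have "(\<lambda>y. a * (deriv ^^ j) f y) differentiable (at x)"
    by (rule differentiable_mult[OF differentiable_const dsD[OF assms(2) j x]])
  then show "(deriv ^^ j) (\<lambda>y. a * f y) differentiable (at x)"
    by (rule diff_local[OF assms(1) _ x, rotated]) (erule e)
qed

lemma ds_mult:
  assumes "open S"
  shows "ds k S f \<Longrightarrow> ds k S g \<Longrightarrow> ds k S (\<lambda>y. f y * g y)"
proof (induction k arbitrary: f g)
  case 0 then show ?case unfolding ds_def by auto
next
  case (Suc k)
  have fd: "ds k S (deriv f)" "ds k S (deriv g)" by (rule ds_deriv[OF Suc.prems(1)], rule ds_deriv[OF Suc.prems(2)])
  have fk: "ds k S f" "ds k S g" by (rule ds_mono[OF Suc.prems(1)], simp, rule ds_mono[OF Suc.prems(2)], simp)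
  have D: "ds k S (\<lambda>y. f y * deriv g y + deriv f y * g y)"
    by (intro ds_add[OF assms] Suc.IH fd fk)
  have H: "((\<lambda>y. f y * g y) has_real_derivative f x * deriv g x + deriv f x * g x) (at x)"
    if x: "x \<in> S" for x
    by (rule DERIV_mult'[OF ds_has_deriv[OF Suc.prems(1) x] ds_has_deriv[OF Suc.prems(2) x]])
  show ?case by (rule ds_SucI[OF assms _ D]) (erule H)
qed

lemma ds_const: "open S \<Longrightarrow> ds k S (\<lambda>y. a)"
proof (induction k arbitrary: a)
  case 0 then show ?case unfolding ds_def by auto
next
  case (Suc k)
  have H: "((\<lambda>y. a) has_real_derivative 0) (at x)" for x by (rule DERIV_const)
  show ?case by (rule ds_SucI[OF Suc.prems _ Suc.IH[OF Suc.prems]]) (rule H)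
qed

lemma ds_id: "open S \<Longrightarrow> ds k S (\<lambda>y. y)"
proof (cases k)
  case 0 then show "open S \<Longrightarrow> ?thesis" by (auto simp: ds_def)
next
  case (Suc m)
  have H: "((\<lambda>y. y) has_real_derivative 1) (at x)" for x by (rule DERIV_ident)
  show "open S \<Longrightarrow> ?thesis" unfolding Suc
    by (rule ds_SucI[where f'="\<lambda>_. 1"], assumption, rule H, rule ds_const, assumption)
qed

lemma ds_comp:
  assumes "open S" "open T" "u ` S \<subseteq> T"
  shows "ds k T g \<Longrightarrow> ds k S u \<Longrightarrow> ds k S (\<lambda>y. g (u y))"
proof (induction k arbitrary: g)
  case 0
  show ?case unfolding ds_def
  proof (intro allI impI ballI)
    fix j x assume j: "j \<le> (0::nat)" and x: "x \<in> S"
    have a: "u differentiable at x" using dsD[OF "0.prems"(2), of 0 x] x by simp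
    have ux: "u x \<in> T" using assms(3) x by blast
    have b: "g differentiable at (u x)" using dsD[OF "0.prems"(1), of 0 "u x"] ux by simp
    show "(deriv ^^ j) (\<lambda>y. g (u y)) differentiable at x"
      using differentiable_chain_at[OF a b] j by (simp add: o_def)
  qed
next
  case (Suc k)
  have D: "ds k S (\<lambda>y. deriv g (u y) * deriv u y)"
  proof (rule ds_mult[OF assms(1)])
    show "ds k S (deriv u)" by (rule ds_deriv[OF Suc.prems(2)])
    have "ds k S u" by (rule ds_mono[OF Suc.prems(2)]) simp
    then show "ds k S (\<lambda>y. deriv g (u y))" by (rule Suc.IH[OF ds_deriv[OF Suc.prems(1)]])
  qed
  have H: "((\<lambda>y. g (u y)) has_real_derivative deriv g (u x) * deriv u x) (at x)"
    if x: "x \<in> S" for x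
    using assms(3) x by (intro DERIV_chain2[OF ds_has_deriv[OF Suc.prems(1)] ds_has_deriv[OF Suc.prems(2)]]) auto
  show ?case by (rule ds_SucI[OF assms(1) _ D]) (erule H)
qed

lemma smooth_mono: "smooth_on T f \<Longrightarrow> S \<subseteq> T \<Longrightarrow> smooth_on S f"
  unfolding smooth_on_def by blast



lemma smooth_comp:
  assumes "open S" "open T" "u ` S \<subseteq> T" "smooth_on T g" "smooth_on S u"
  shows "smooth_on S (\<lambda>y. g (u y))"
  unfolding smooth_ds
proof
  fix k
  have "ds k T g" "ds k S u" using assms(4,5) unfolding smooth_ds by blast+
  then show "ds k S (\<lambda>y. g (u y))" by (rule ds_comp[OF assms(1-3)])
qed

lemma smooth_mult:
  assumes "open S" "smooth_on S f" "smooth_on S g"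
  shows "smooth_on S (\<lambda>y. f y * g y)"
  unfolding smooth_ds
proof
  fix k
  have "ds k S f" "ds k S g" using assms(2,3) unfolding smooth_ds by blast+
  then show "ds k S (\<lambda>y. f y * g y)" by (rule ds_mult[OF assms(1)])
qed

lemma smooth_add:
  assumes "open S" "smooth_on S f" "smooth_on S g"
  shows "smooth_on S (\<lambda>y. f y + g y)"
  unfolding smooth_ds
proof
  fix k
  have "ds k S f" "ds k S g" using assms(2,3) unfolding smooth_ds by blast+
  then show "ds k S (\<lambda>y. f y + g y)" by (rule ds_add[OF assms(1)])
qed

lemma smooth_const: "open S \<Longrightarrow> smooth_on S (\<lambda>y. a)"
  unfolding smooth_ds by (intro allI ds_const)

lemma smooth_id: "open S \<Longrightarrow> smooth_on S (\<lambda>y. y)"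
  unfolding smooth_ds by (intro allI ds_id)

lemma smooth_has_deriv: "smooth_on S f \<Longrightarrow> x \<in> S \<Longrightarrow> (f has_real_derivative deriv f x) (at x)"
  unfolding smooth_ds by (intro ds_has_deriv[of 0]) auto

lemma smooth_D_has_deriv: "smooth_on S f \<Longrightarrow> x \<in> S \<Longrightarrow>
   ((deriv ^^ j) f has_real_derivative (deriv ^^ Suc j) f x) (at x)"
  unfolding smooth_ds by (intro ds_D_has_deriv[of "Suc j" S f j x]) auto

lemma smooth_cont: "smooth_on S f \<Longrightarrow> x \<in> S \<Longrightarrow> isCont f x"
  using ds_cont[of 0 S f 0 x] unfolding smooth_ds by simp

lemma D_mult_Suc:
  assumes "open S" "smooth_on S f" "smooth_on S g" "x \<in> S"
  shows "(deriv ^^ Suc m) (\<lambda>y. f y * g y) x =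
     (deriv ^^ m) (\<lambda>y. f y * deriv g y) x + (deriv ^^ m) (\<lambda>y. deriv f y * g y) x"
proof -
  have dd: "deriv (\<lambda>y. f y * g y) y = f y * deriv g y + deriv f y * g y" if "y \<in> S" for y
    by (rule DERIV_imp_deriv[OF DERIV_mult'[OF smooth_has_deriv[OF assms(2) that] smooth_has_deriv[OF assms(3) that]]])
  have "(deriv ^^ Suc m) (\<lambda>y. f y * g y) x = (deriv ^^ m) (deriv (\<lambda>y. f y * g y)) x"
    by (simp only: D_Suc_right)
  also have "\<dots> = (deriv ^^ m) (\<lambda>y. f y * deriv g y + deriv f y * g y) x"
    by (rule D_local[OF assms(1) _ assms(4)]) (erule dd)
  also have "\<dots> = (deriv ^^ m) (\<lambda>y. f y * deriv g y) x + (deriv ^^ m) (\<lambda>y. deriv f y * g y) x"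
  proof (rule D_add[OF assms(1) _ _ assms(4)])
    show "ds m S (\<lambda>y. f y * deriv g y)"
      using smooth_mult[OF assms(1,2) smooth_deriv[OF assms(3)]] unfolding smooth_ds by blast
    show "ds m S (\<lambda>y. deriv f y * g y)"
      using smooth_mult[OF assms(1) smooth_deriv[OF assms(2)] assms(3)] unfolding smooth_ds by blast
  qed
  finally show ?thesis .
qed

definition bd :: "real set \<Rightarrow> (nat \<Rightarrow> real \<Rightarrow> real) \<Rightarrow> nat \<Rightarrow> bool" where
  "bd S F k \<longleftrightarrow> (\<exists>M. \<forall>n. \<forall>x\<in>S. \<bar>(deriv ^^ k) (F n) x\<bar> \<le> M)"

lemma bd_deriv: "bd S g (Suc j) \<Longrightarrow> bd S (\<lambda>n. deriv (g n)) j"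
  unfolding bd_def by (simp only: D_Suc_right)

lemma bdI2:
  assumes "\<And>n x. x \<in> S \<Longrightarrow> (deriv ^^ k) (H n) x = A n x + B n x"
    and "\<exists>M. \<forall>n. \<forall>x\<in>S. \<bar>A n x\<bar> \<le> M" "\<exists>M. \<forall>n. \<forall>x\<in>S. \<bar>B n x\<bar> \<le> M"
  shows "bd S H k"
proof -
  from assms(2,3) obtain M1 M2 where m: "\<forall>n. \<forall>x\<in>S. \<bar>A n x\<bar> \<le> M1" "\<forall>n. \<forall>x\<in>S. \<bar>B n x\<bar> \<le> M2" by blast
  have "\<bar>(deriv ^^ k) (H n) x\<bar> \<le> M1 + M2" if "x \<in> S" for n x
  proof -
    have "\<bar>A n x\<bar> \<le> M1" "\<bar>B n x\<bar> \<le> M2" using m that by auto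
    then show ?thesis using assms(1)[of x n, OF that] abs_triangle_ineq[of "A n x" "B n x"] by linarith
  qed
  then show ?thesis unfolding bd_def by blast
qed

lemma bd_mult:
  assumes "open S"
  shows "(\<And>n. smooth_on S (f n)) \<Longrightarrow> (\<And>n. smooth_on S (g n)) \<Longrightarrow>
    (\<And>j. j \<le> k \<Longrightarrow> bd S f j) \<Longrightarrow> (\<And>j. j \<le> k \<Longrightarrow> bd S g j) \<Longrightarrow>
    bd S (\<lambda>n y. f n y * g n y) k"
proof (induction k arbitrary: f g)
  case 0
  from "0.prems"(3)[of 0] "0.prems"(4)[of 0] obtain M1 M2 where
    m: "\<forall>n. \<forall>x\<in>S. \<bar>f n x\<bar> \<le> M1" "\<forall>n. \<forall>x\<in>S. \<bar>g n x\<bar> \<le> M2"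
    unfolding bd_def by auto
  have "\<bar>f n x * g n x\<bar> \<le> M1 * M2" if "x \<in> S" for n x
  proof -
    have a: "\<bar>f n x\<bar> \<le> M1" and b: "\<bar>g n x\<bar> \<le> M2" using m that by auto
    show ?thesis unfolding abs_mult by (rule mult_mono[OF a b order_trans[OF abs_ge_zero a] abs_ge_zero])
  qed
  then show ?case unfolding bd_def by auto
next
  case (Suc k)
  show ?case
  proof (rule bdI2)
    fix n x assume x: "x \<in> S"
    show "(deriv ^^ Suc k) (\<lambda>y. f n y * g n y) x =
       (deriv ^^ k) (\<lambda>y. f n y * deriv (g n) y) x + (deriv ^^ k) (\<lambda>y. deriv (f n) y * g n y) x"
      by (rule D_mult_Suc[OF assms Suc.prems(1,2) x])
  next
    have "bd S (\<lambda>n y. f n y * deriv (g n) y) k"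
    proof (rule Suc.IH)
      show "smooth_on S (f n)" for n by (rule Suc.prems(1))
      show "smooth_on S (deriv (g n))" for n by (rule smooth_deriv[OF Suc.prems(2)])
      show "bd S f j" if "j \<le> k" for j using Suc.prems(3) that by simp
      show "bd S (\<lambda>n. deriv (g n)) j" if "j \<le> k" for j
        by (rule bd_deriv) (use Suc.prems(4) that in simp)
    qed
    then show "\<exists>M. \<forall>n. \<forall>x\<in>S. \<bar>(deriv ^^ k) (\<lambda>y. f n y * deriv (g n) y) x\<bar> \<le> M"
      unfolding bd_def .
  next
    have "bd S (\<lambda>n y. deriv (f n) y * g n y) k"
    proof (rule Suc.IH)
      show "smooth_on S (g n)" for n by (rule Suc.prems(2))
      show "smooth_on S (deriv (f n))" for n by (rule smooth_deriv[OF Suc.prems(1)])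
      show "bd S g j" if "j \<le> k" for j using Suc.prems(4) that by simp
      show "bd S (\<lambda>n. deriv (f n)) j" if "j \<le> k" for j
        by (rule bd_deriv) (use Suc.prems(3) that in simp)
    qed
    then show "\<exists>M. \<forall>n. \<forall>x\<in>S. \<bar>(deriv ^^ k) (\<lambda>y. deriv (f n) y * g n y) x\<bar> \<le> M"
      unfolding bd_def .
  qed
qed

lemma smooth_bounded_on_compact:
  assumes "smooth_on T g" "compact K" "K \<subseteq> T"
  shows "\<exists>M. \<forall>y\<in>K. \<bar>g y\<bar> \<le> M"
proof -
  have "continuous_on K g"
    using assms smooth_cont continuous_at_imp_continuous_on by blast
  then have "bounded (g ` K)" using assms(2) compact_continuous_image compact_imp_bounded by blast
  then show ?thesis unfolding bounded_iff by auto
qed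

lemma bd_comp:
  assumes "open S" "open T" "compact K" "K \<subseteq> T" "\<And>n. smooth_on S (u n)" "\<And>n. u n ` S \<subseteq> K"
  shows "smooth_on T g \<Longrightarrow> (\<And>j. 1 \<le> j \<Longrightarrow> j \<le> k \<Longrightarrow> bd S u j) \<Longrightarrow> bd S (\<lambda>n y. g (u n y)) k"
proof (induction k arbitrary: g rule: less_induct)
  case (less k)
  have uT: "u n ` S \<subseteq> T" for n using assms(4,6) by blast
  show ?case
  proof (cases k)
    case 0
    obtain M where M: "\<forall>y\<in>K. \<bar>g y\<bar> \<le> M" using smooth_bounded_on_compact[OF less.prems(1) assms(3,4)] by blast
    have "\<bar>g (u n x)\<bar> \<le> M" if "x \<in> S" for n x using M assms(6) that by blast
    then show ?thesis unfolding bd_def 0 by auto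
  next
    case (Suc m)
    have sg: "smooth_on S (\<lambda>y. g (u n y))" for n
      by (rule smooth_comp[OF assms(1,2) uT less.prems(1) assms(5)])
    have sdg: "smooth_on S (\<lambda>y. deriv g (u n y))" for n
      by (rule smooth_comp[OF assms(1,2) uT smooth_deriv[OF less.prems(1)] assms(5)])
    have dd: "deriv (\<lambda>y. g (u n y)) y = deriv g (u n y) * deriv (u n) y" if "y \<in> S" for n y
    proof -
      have a: "(g has_real_derivative deriv g (u n y)) (at (u n y))"
        by (rule smooth_has_deriv[OF less.prems(1)]) (use uT that in blast)
      have b: "(u n has_real_derivative deriv (u n) y) (at y)" by (rule smooth_has_deriv[OF assms(5) that])
      show ?thesis by (rule DERIV_imp_deriv[OF DERIV_chain2[OF a b]])
    qed
    have eq: "(deriv ^^ k) (\<lambda>y. g (u n y)) x = (deriv ^^ m) (\<lambda>y. deriv g (u n y) * deriv (u n) y) x"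
      if "x \<in> S" for n x
      unfolding Suc D_Suc_right by (rule D_local[OF assms(1) _ that]) (erule dd)
    have "bd S (\<lambda>n y. deriv g (u n y) * deriv (u n) y) m"
    proof (rule bd_mult[OF assms(1)])
      show "smooth_on S (\<lambda>y. deriv g (u n y))" for n by (rule sdg)
      show "smooth_on S (deriv (u n))" for n by (rule smooth_deriv[OF assms(5)])
      show "bd S (\<lambda>n y. deriv g (u n y)) j" if "j \<le> m" for j
      proof (rule less.IH)
        show "j < k" using that Suc by simp
        show "smooth_on T (deriv g)" by (rule smooth_deriv[OF less.prems(1)])
        show "bd S u i" if "1 \<le> i" "i \<le> j" for i using less.prems(2) that \<open>j \<le> m\<close> Suc by simp
      qed
      show "bd S (\<lambda>n. deriv (u n)) j" if "j \<le> m" for j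
        by (rule bd_deriv) (use less.prems(2) that Suc in simp)
    qed
    then show ?thesis unfolding bd_def using eq by simp
  qed
qed

lemma bd_rem:
  assumes "open S"
  shows "(\<And>n. smooth_on S (f n)) \<Longrightarrow> (\<And>n. smooth_on S (g n)) \<Longrightarrow>
    (\<And>j. j \<le> m \<Longrightarrow> bd S f j) \<Longrightarrow> (\<And>j. j < m \<Longrightarrow> bd S g j) \<Longrightarrow>
    \<exists>R. \<forall>n. \<forall>x\<in>S. \<bar>(deriv ^^ m) (\<lambda>y. f n y * g n y) x - f n x * (deriv ^^ m) (g n) x\<bar> \<le> R"
proof (induction m arbitrary: f g)
  case 0 then show ?case by (intro exI[of _ 0]) simp
next
  case (Suc m)
  have "\<exists>R. \<forall>n. \<forall>x\<in>S. \<bar>(deriv ^^ m) (\<lambda>y. f n y * deriv (g n) y) x - f n x * (deriv ^^ m) (deriv (g n)) x\<bar> \<le> R"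
  proof (rule Suc.IH)
    show "smooth_on S (f n)" for n by (rule Suc.prems(1))
    show "smooth_on S (deriv (g n))" for n by (rule smooth_deriv[OF Suc.prems(2)])
    show "bd S f j" if "j \<le> m" for j using Suc.prems(3) that by simp
    show "bd S (\<lambda>n. deriv (g n)) j" if "j < m" for j
      by (rule bd_deriv) (use Suc.prems(4) that in simp)
  qed
  then obtain R1 where R1: "\<forall>n. \<forall>x\<in>S. \<bar>(deriv ^^ m) (\<lambda>y. f n y * deriv (g n) y) x - f n x * (deriv ^^ m) (deriv (g n)) x\<bar> \<le> R1"
    by blast
  have "bd S (\<lambda>n y. deriv (f n) y * g n y) m"
  proof (rule bd_mult[OF assms])
    show "smooth_on S (g n)" for n by (rule Suc.prems(2))
    show "smooth_on S (deriv (f n))" for n by (rule smooth_deriv[OF Suc.prems(1)])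
    show "bd S g j" if "j \<le> m" for j using Suc.prems(4) that by simp
    show "bd S (\<lambda>n. deriv (f n)) j" if "j \<le> m" for j
      by (rule bd_deriv) (use Suc.prems(3) that in simp)
  qed
  then obtain R2 where R2: "\<forall>n. \<forall>x\<in>S. \<bar>(deriv ^^ m) (\<lambda>y. deriv (f n) y * g n y) x\<bar> \<le> R2"
    unfolding bd_def by blast
  have "\<bar>(deriv ^^ Suc m) (\<lambda>y. f n y * g n y) x - f n x * (deriv ^^ Suc m) (g n) x\<bar> \<le> R1 + R2"
    if x: "x \<in> S" for n x
  proof -
    have e1: "(deriv ^^ Suc m) (\<lambda>y. f n y * g n y) x =
       (deriv ^^ m) (\<lambda>y. f n y * deriv (g n) y) x + (deriv ^^ m) (\<lambda>y. deriv (f n) y * g n y) x"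
      by (rule D_mult_Suc[OF assms Suc.prems(1,2) x])
    have e2: "(deriv ^^ Suc m) (g n) x = (deriv ^^ m) (deriv (g n)) x" by (simp only: D_Suc_right)
    have r1: "\<bar>(deriv ^^ m) (\<lambda>y. f n y * deriv (g n) y) x - f n x * (deriv ^^ m) (deriv (g n)) x\<bar> \<le> R1"
      using R1 x by blast
    have r2: "\<bar>(deriv ^^ m) (\<lambda>y. deriv (f n) y * g n y) x\<bar> \<le> R2" using R2 x by blast
    show ?thesis unfolding e1 e2 using r1 r2 by linarith
  qed
  then show ?case by blast
qed



lemma D_const: "(deriv ^^ m) (\<lambda>_. c) = (if m = 0 then (\<lambda>_. c) else (\<lambda>_. 0 :: real))"
  by (induction m) auto

lemma iter_props:
  assumes "open S" "smooth_on S \<sigma>" "\<sigma> ` S \<subseteq> S"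
  shows "smooth_on S (\<sigma> ^^ n) \<and> (\<sigma> ^^ n) ` S \<subseteq> S"
proof (induction n)
  case 0
  have "smooth_on S (\<lambda>y. y)" by (rule smooth_id[OF assms(1)])
  then show ?case by (simp add: id_def)
next
  case (Suc n)
  have e: "(\<sigma> ^^ Suc n) = (\<lambda>y. \<sigma> ((\<sigma> ^^ n) y))" by auto
  have "smooth_on S (\<lambda>y. \<sigma> ((\<sigma> ^^ n) y))"
    by (rule smooth_comp[OF assms(1,1)]) (use Suc assms in auto)
  moreover have "(\<lambda>y. \<sigma> ((\<sigma> ^^ n) y)) ` S \<subseteq> S" using Suc assms(3) by auto
  ultimately show ?case unfolding e by blast
qed

lemma iter_bd:
  assumes S: "open S" "open T" "compact K" "S \<subseteq> K" "K \<subseteq> T" "smooth_on T \<sigma>" "\<sigma> ` S \<subseteq> S"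
    and small: "\<And>y. y \<in> S \<Longrightarrow> \<bar>deriv \<sigma> y\<bar> \<le> 1/2"
  shows "1 \<le> k \<Longrightarrow> bd S (\<lambda>n. \<sigma> ^^ n) k"
proof (induction k rule: less_induct)
  case (less k)
  then obtain m where k: "k = Suc m" by (cases k) auto
  have sS: "smooth_on S \<sigma>" by (rule smooth_mono[OF S(6)]) (use S(4,5) in blast)
  have su: "smooth_on S (\<sigma> ^^ n)" for n using iter_props[OF S(1) sS S(7)] by blast
  have uS: "(\<sigma> ^^ n) ` S \<subseteq> S" for n using iter_props[OF S(1) sS S(7)] by blast
  have uK: "(\<sigma> ^^ n) ` S \<subseteq> K" for n using uS S(4) by blast
  have uT: "(\<sigma> ^^ n) ` S \<subseteq> T" for n using uK S(5) by blast
  have IHu: "bd S (\<lambda>n. \<sigma> ^^ n) j" if "1 \<le> j" "j \<le> m" for j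
    using less.IH[of j] that k by simp
  have vrec: "deriv (\<sigma> ^^ Suc n) y = deriv \<sigma> ((\<sigma> ^^ n) y) * deriv (\<sigma> ^^ n) y" if y: "y \<in> S" for n y
  proof -
    have e: "(\<sigma> ^^ Suc n) = (\<lambda>y. \<sigma> ((\<sigma> ^^ n) y))" by auto
    have a: "(\<sigma> has_real_derivative deriv \<sigma> ((\<sigma> ^^ n) y)) (at ((\<sigma> ^^ n) y))"
      by (rule smooth_has_deriv[OF sS]) (use uS y in blast)
    have b: "((\<sigma> ^^ n) has_real_derivative deriv (\<sigma> ^^ n) y) (at y)" by (rule smooth_has_deriv[OF su y])
    show ?thesis unfolding e by (rule DERIV_imp_deriv[OF DERIV_chain2[OF a b]])
  qed
  have eqD: "(deriv ^^ m) (deriv (\<sigma> ^^ Suc n)) x =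
      (deriv ^^ m) (\<lambda>y. deriv \<sigma> ((\<sigma> ^^ n) y) * deriv (\<sigma> ^^ n) y) x" if x: "x \<in> S" for n x
    by (rule D_local[OF S(1) _ x]) (erule vrec)
  have "\<exists>R. \<forall>n. \<forall>x\<in>S. \<bar>(deriv ^^ m) (\<lambda>y. deriv \<sigma> ((\<sigma> ^^ n) y) * deriv (\<sigma> ^^ n) y) x
            - deriv \<sigma> ((\<sigma> ^^ n) x) * (deriv ^^ m) (deriv (\<sigma> ^^ n)) x\<bar> \<le> R"
  proof (rule bd_rem[OF S(1)])
    show "smooth_on S (\<lambda>y. deriv \<sigma> ((\<sigma> ^^ n) y))" for n
      by (rule smooth_comp[OF S(1,2) uT smooth_deriv[OF S(6)] su])
    show "smooth_on S (deriv (\<sigma> ^^ n))" for n by (rule smooth_deriv[OF su])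
    show "bd S (\<lambda>n y. deriv \<sigma> ((\<sigma> ^^ n) y)) j" if "j \<le> m" for j
    proof (rule bd_comp[OF S(1,2,3,5) su uK])
      show "smooth_on T (deriv \<sigma>)" by (rule smooth_deriv[OF S(6)])
      show "bd S (\<lambda>n. \<sigma> ^^ n) i" if "1 \<le> i" "i \<le> j" for i using IHu that \<open>j \<le> m\<close> by simp
    qed
    show "bd S (\<lambda>n. deriv (\<sigma> ^^ n)) j" if "j < m" for j
      by (rule bd_deriv) (use IHu that in simp)
  qed
  then obtain R where R: "\<forall>n. \<forall>x\<in>S. \<bar>(deriv ^^ m) (\<lambda>y. deriv \<sigma> ((\<sigma> ^^ n) y) * deriv (\<sigma> ^^ n) y) x
            - deriv \<sigma> ((\<sigma> ^^ n) x) * (deriv ^^ m) (deriv (\<sigma> ^^ n)) x\<bar> \<le> R" by blast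
  define B where "B = max 1 (2 * R)"
  have main: "\<forall>x\<in>S. \<bar>(deriv ^^ m) (deriv (\<sigma> ^^ n)) x\<bar> \<le> B" for n
  proof (induction n)
    case 0
    have "\<bar>(deriv ^^ m) (\<lambda>_. 1) x\<bar> \<le> 1" for x :: real by (simp add: D_const)
    then show ?case unfolding B_def by (simp add: le_max_iff_disj)
  next
    case (Suc n)
    show ?case
    proof
      fix x assume x: "x \<in> S"
      have ux: "(\<sigma> ^^ n) x \<in> S" using uS x by blast
      have R0: "0 \<le> R" using R x by (meson abs_ge_zero order_trans)
      have r: "\<bar>(deriv ^^ m) (\<lambda>y. deriv \<sigma> ((\<sigma> ^^ n) y) * deriv (\<sigma> ^^ n) y) x
            - deriv \<sigma> ((\<sigma> ^^ n) x) * (deriv ^^ m) (deriv (\<sigma> ^^ n)) x\<bar> \<le> R" using R x by blast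
      have s: "\<bar>deriv \<sigma> ((\<sigma> ^^ n) x)\<bar> \<le> 1/2" by (rule small[OF ux])
      have ih: "\<bar>(deriv ^^ m) (deriv (\<sigma> ^^ n)) x\<bar> \<le> B" using Suc x by blast
      have "\<bar>deriv \<sigma> ((\<sigma> ^^ n) x) * (deriv ^^ m) (deriv (\<sigma> ^^ n)) x\<bar> \<le> 1/2 * B"
        unfolding abs_mult by (rule mult_mono[OF s ih]) auto
      moreover have "1/2 * B + R \<le> B" unfolding B_def by auto
      ultimately show "\<bar>(deriv ^^ m) (deriv (\<sigma> ^^ Suc n)) x\<bar> \<le> B"
        unfolding eqD[OF x] using r by linarith
    qed
  qed
  show ?case unfolding bd_def k D_Suc_right using main by blast
qed

lemma series_step:
  assumes "open S" "convex S" "\<And>n. smooth_on S (a n)" "0 \<le> q" "q < 1"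
    and Mk: "\<And>n x. x \<in> S \<Longrightarrow> \<bar>(deriv ^^ Suc k) (a n) x\<bar> \<le> M * q ^ n"
    and sums: "\<And>x. x \<in> S \<Longrightarrow> (\<lambda>n. (deriv ^^ k) (a n) x) sums (deriv ^^ k) F x"
    and x: "x \<in> S"
  shows "((deriv ^^ k) F has_real_derivative (\<Sum>n. (deriv ^^ Suc k) (a n) x)) (at x)"
proof -
  have sm: "summable (\<lambda>n. M * q ^ n)"
    by (rule summable_mult) (rule summable_geometric, use assms(4,5) in simp)
  have unif: "uniform_limit S (\<lambda>n x. \<Sum>i<n. (deriv ^^ Suc k) (a i) x)
      (\<lambda>x. \<Sum>i. (deriv ^^ Suc k) (a i) x) sequentially"
    by (rule Weierstrass_m_test[OF _ sm]) (simp only: real_norm_def, erule Mk)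
  have der: "((deriv ^^ k) (a n) has_field_derivative (deriv ^^ Suc k) (a n) y) (at y within S)"
    if "y \<in> S" for n y
    by (rule has_field_derivative_at_within[OF smooth_D_has_deriv[OF assms(3) that]])
  have summ: "summable (\<lambda>n. (deriv ^^ k) (a n) x)" using sums[OF x] sums_summable by blast
  obtain g where g: "\<forall>y\<in>S. (\<lambda>n. (deriv ^^ k) (a n) y) sums g y \<and>
      (g has_field_derivative (\<Sum>i. (deriv ^^ Suc k) (a i) y)) (at y within S)"
    using has_field_derivative_series[OF assms(2) der unif x summ] by blast
  have geq: "g y = (deriv ^^ k) F y" if "y \<in> S" for y
    using g sums that sums_unique2 by blast
  have "(g has_field_derivative (\<Sum>i. (deriv ^^ Suc k) (a i) x)) (at x)"
    using g x at_within_open[OF x assms(1)] by metis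
  then show ?thesis
    by (rule has_field_derivative_transform_within_open[OF _ assms(1) x]) (erule geq)
qed

lemma series_smooth:
  assumes "open S" "convex S" "\<And>n. smooth_on S (a n)" "0 \<le> q" "q < 1"
    and Mk: "\<And>k. \<exists>M. \<forall>n. \<forall>x\<in>S. \<bar>(deriv ^^ k) (a n) x\<bar> \<le> M * q ^ n"
  shows "smooth_on S (\<lambda>x. \<Sum>n. a n x)"
proof -
  define F where "F = (\<lambda>x. \<Sum>n. a n x)"
  have summ: "summable (\<lambda>n. (deriv ^^ k) (a n) x)" if x: "x \<in> S" for k x
  proof -
    obtain M where M: "\<forall>n. \<forall>x\<in>S. \<bar>(deriv ^^ k) (a n) x\<bar> \<le> M * q ^ n" using Mk by blast
    have sm: "summable (\<lambda>n. M * q ^ n)"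
      by (rule summable_mult) (rule summable_geometric, use assms(4,5) in simp)
    show ?thesis by (rule summable_comparison_test'[OF sm, of 0]) (use M x in simp)
  qed
  have P: "\<forall>x\<in>S. (\<lambda>n. (deriv ^^ k) (a n) x) sums (deriv ^^ k) F x" for k
  proof (induction k)
    case 0
    show ?case using summ[of _ 0] by (simp add: F_def summable_sums)
  next
    case (Suc k)
    show ?case
    proof
      fix x assume x: "x \<in> S"
      obtain M where M: "\<forall>n. \<forall>x\<in>S. \<bar>(deriv ^^ Suc k) (a n) x\<bar> \<le> M * q ^ n" using Mk by blast
      have d: "((deriv ^^ k) F has_real_derivative (\<Sum>n. (deriv ^^ Suc k) (a n) x)) (at x)"
        by (rule series_step[OF assms(1-5) _ _ x]) (use M Suc in auto)
      have "(deriv ^^ Suc k) F x = deriv ((deriv ^^ k) F) x" by (rule D_Suc)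
      also have "\<dots> = (\<Sum>n. (deriv ^^ Suc k) (a n) x)" by (rule DERIV_imp_deriv[OF d])
      finally have "(deriv ^^ Suc k) F x = (\<Sum>n. (deriv ^^ Suc k) (a n) x)" .
      then show "(\<lambda>n. (deriv ^^ Suc k) (a n) x) sums (deriv ^^ Suc k) F x"
        using summ[OF x, of "Suc k"] by (simp add: summable_sums)
    qed
  qed
  have "(deriv ^^ k) F differentiable (at x)" if x: "x \<in> S" for k x
  proof -
    obtain M where M: "\<forall>n. \<forall>x\<in>S. \<bar>(deriv ^^ Suc k) (a n) x\<bar> \<le> M * q ^ n" using Mk by blast
    have d: "((deriv ^^ k) F has_real_derivative (\<Sum>n. (deriv ^^ Suc k) (a n) x)) (at x)"
      by (rule series_step[OF assms(1-5) _ _ x]) (use M P in auto)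
    then show ?thesis using real_differentiable_def by blast
  qed
  then show ?thesis unfolding smooth_on_def F_def by blast
qed



lemma ds_inverse: "ds k {0<..} (\<lambda>x::real. inverse x)"
proof (induction k)
  case 0 then show ?case unfolding ds_def by auto
next
  case (Suc k)
  have o: "open {0::real<..}" by simp
  have H: "((\<lambda>x. inverse x) has_real_derivative (-1) * (inverse x * inverse x)) (at x)"
    if "x \<in> {0<..}" for x
    by (rule DERIV_cong[OF DERIV_inverse]) (use that in \<open>auto simp: power2_eq_square\<close>)
  have D: "ds k {0<..} (\<lambda>x. (-1) * (inverse x * inverse x))"
    by (rule ds_cmult[OF o ds_mult[OF o Suc Suc]])
  show ?case by (rule ds_SucI[OF o _ D]) (erule H)
qed

lemma smooth_ln: "smooth_on {0<..} (\<lambda>x::real. ln x)"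
  unfolding smooth_ds
proof
  fix k
  have o: "open {0::real<..}" by simp
  have H: "((\<lambda>x. ln x) has_real_derivative inverse x) (at x)" if "x \<in> {0<..}" for x :: real
    using DERIV_ln[of x] that by simp
  have "ds (Suc k) {0<..} (\<lambda>x. ln x)"
    by (rule ds_SucI[OF o _ ds_inverse]) (erule H)
  then show "ds k {0<..} (\<lambda>x. ln x)" by (rule ds_mono) simp
qed

lemma ds_exp: "ds k UNIV (\<lambda>x::real. exp x)"
proof (induction k)
  case 0 then show ?case unfolding ds_def real_differentiable_def by (auto intro: DERIV_exp)
next
  case (Suc k)
  have H: "((\<lambda>x. exp x) has_real_derivative exp x) (at x)" for x :: real by (rule DERIV_exp)
  show ?case by (rule ds_SucI[OF open_UNIV _ Suc]) (rule H)
qed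

lemma smooth_exp: "smooth_on UNIV (\<lambda>x::real. exp x)"
  unfolding smooth_ds by (intro allI ds_exp)

lemma smooth_cmult:
  assumes "open S" "smooth_on S f"
  shows "smooth_on S (\<lambda>y. a * f y)"
  unfolding smooth_ds
proof
  fix k
  have "ds k S f" using assms(2) unfolding smooth_ds by blast
  then show "ds k S (\<lambda>y. a * f y)" by (rule ds_cmult[OF assms(1)])
qed

theorem proposition3p8:
  fixes b \<phi> \<theta> c :: "real \<Rightarrow> real" and U W :: "real set"
  assumes U: "open U" "0 \<in> U" and b_smooth: "smooth_on U b"
    and b_def: "\<And>t. b t = 1 + \<phi> t" and \<phi>_flat: "flat_at_0 \<phi>"
    and W: "open W" "0 \<in> W" and \<theta>_smooth: "smooth_on W \<theta>"
    and \<theta>0: "\<theta> 0 = 0" and \<theta>_into: "\<theta> ` W \<subseteq> U"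
    and \<theta>_right_inv: "\<And>x. x \<in> W \<Longrightarrow> \<theta> x * b (\<theta> x) = x"
    and \<theta>_left_inv: "\<exists>W'. open W' \<and> 0 \<in> W' \<and> W' \<subseteq> U \<and>
                     (\<forall>t\<in>W'. t * b t \<in> W \<and> \<theta> (t * b t) = t)"
    and c_smooth: "smooth_on W c" and \<theta>_c: "\<And>x. x \<in> W \<Longrightarrow> \<theta> x = x * c x"
  shows "\<exists>V. open V \<and> 0 \<in> V \<and> V \<subseteq> W \<and>
           (\<forall>x\<in>V. \<forall>n. ((\<lambda>y. (\<theta> y) ^ 4) ^^ n) x \<in> W) \<and>
           (\<forall>x\<in>V. convergent_prod (\<lambda>n. c (((\<lambda>y. (\<theta> y) ^ 4) ^^ n) x) powr (1 / 4 ^ n))) \<and>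
           smooth_on V (\<lambda>x. sqrt (prodinf (\<lambda>n. c (((\<lambda>y. (\<theta> y) ^ 4) ^^ n) x) powr (1 / 4 ^ n))))"
proof -
  define \<sigma> where "\<sigma> = (\<lambda>y. (\<theta> y) ^ 4)"
  have \<phi>0: "\<phi> 0 = 0" using \<phi>_flat unfolding flat_at_0_def by (metis funpow_0)
  have b0: "b 0 = 1" using b_def[of 0] \<phi>0 by simp
  have dc: "(c has_real_derivative deriv c 0) (at 0)" by (rule smooth_has_deriv[OF c_smooth W(2)])
  have "((\<lambda>x. x * c x) has_real_derivative c 0) (at 0)"
    by (rule DERIV_cong[OF DERIV_mult'[OF DERIV_ident dc]]) simp
  then have d\<theta>: "(\<theta> has_real_derivative c 0) (at 0)"
    by (rule has_field_derivative_transform_within_open[OF _ W(1) W(2)]) (simp add: \<theta>_c)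
  have db: "(b has_real_derivative deriv b (\<theta> 0)) (at (\<theta> 0))"
    by (rule smooth_has_deriv[OF b_smooth]) (simp add: \<theta>0 U(2))
  have "((\<lambda>x. \<theta> x * b (\<theta> x)) has_real_derivative c 0) (at 0)"
    by (rule DERIV_cong[OF DERIV_mult'[OF d\<theta> DERIV_chain2[OF db d\<theta>]]]) (simp add: \<theta>0 b0)
  then have "((\<lambda>x. x) has_real_derivative c 0) (at 0)"
    by (rule has_field_derivative_transform_within_open[OF _ W(1) W(2)]) (simp add: \<theta>_right_inv)
  then have c0: "c 0 = 1" using DERIV_unique DERIV_ident by metis
  have \<sigma>_eq: "\<sigma> = (\<lambda>y. \<theta> y * (\<theta> y * (\<theta> y * \<theta> y)))"
    unfolding \<sigma>_def by (simp add: eval_nat_numeral)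
  have \<sigma>_smooth: "smooth_on W \<sigma>"
    unfolding \<sigma>_eq by (intro smooth_mult[OF W(1)] \<theta>_smooth)
  have "(\<sigma> has_real_derivative of_nat 4 * (c 0 * \<theta> 0 ^ (4 - Suc 0))) (at 0)"
    unfolding \<sigma>_def by (rule DERIV_power[OF d\<theta>])
  then have d\<sigma>0: "deriv \<sigma> 0 = 0" using DERIV_imp_deriv \<theta>0 by fastforce
  have cont_d\<sigma>: "isCont (deriv \<sigma>) 0" by (rule smooth_cont[OF smooth_deriv[OF \<sigma>_smooth] W(2)])
  have cont_c: "isCont c 0" by (rule smooth_cont[OF c_smooth W(2)])
  obtain d1 where d1: "d1 > 0" "\<And>y. dist y 0 < d1 \<Longrightarrow> dist (c y) (c 0) < 1/2"
    using cont_c unfolding continuous_at_eps_delta by (metis half_gt_zero zero_less_one)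
  obtain d2 where d2: "d2 > 0" "\<And>y. dist y 0 < d2 \<Longrightarrow> dist (deriv \<sigma> y) (deriv \<sigma> 0) < 1/2"
    using cont_d\<sigma> unfolding continuous_at_eps_delta by (metis half_gt_zero zero_less_one)
  obtain d3 where d3: "d3 > 0" "ball 0 d3 \<subseteq> W" using openE[OF W] by blast
  define r0 where "r0 = min d1 (min d2 d3)"
  define r where "r = min (r0 / 2) (1/4)"
  have r0: "r0 > 0" unfolding r0_def using d1 d2 d3 by simp
  have r: "r > 0" "r < r0" "r \<le> 1/4" unfolding r_def using r0 by auto
  define S where "S = ball (0::real) r"
  define T where "T = ball (0::real) r0"
  define K where "K = cball (0::real) r"
  have oS: "open S" and oT: "open T" and cK: "compact K" and cvS: "convex S"
    unfolding S_def T_def K_def by auto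
  have SK: "S \<subseteq> K" unfolding S_def K_def by auto
  have KT: "K \<subseteq> T" unfolding K_def T_def using r by auto
  have TW: "T \<subseteq> W" using d3 unfolding T_def r0_def by auto
  have SW: "S \<subseteq> W" using SK KT TW by blast
  have T_c: "1/2 < c y \<and> c y < 2" if "y \<in> T" for y
  proof -
    have "dist y 0 < d1" using that unfolding T_def r0_def by (simp add: dist_commute)
    then have "dist (c y) 1 < 1/2" using d1(2) c0 by force
    then have "\<bar>c y - 1\<bar> < 1/2" by (simp add: dist_real_def)
    then show ?thesis by linarith
  qed
  have T_d\<sigma>: "\<bar>deriv \<sigma> y\<bar> \<le> 1/2" if "y \<in> T" for y
  proof -
    have "dist y 0 < d2" using that unfolding T_def r0_def by (simp add: dist_commute)
    then have "dist (deriv \<sigma> y) 0 < 1/2" using d2(2) d\<sigma>0 by force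
    then show ?thesis by (simp add: dist_real_def)
  qed
  have \<sigma>S: "\<sigma> ` S \<subseteq> S"
  proof
    fix z assume "z \<in> \<sigma> ` S"
    then obtain y where y: "y \<in> S" and z: "z = \<sigma> y" by blast
    have yT: "y \<in> T" using y SK KT by blast
    have ay: "\<bar>y\<bar> < r" using y unfolding S_def by simp
    have "\<bar>\<theta> y\<bar> = \<bar>y\<bar> * \<bar>c y\<bar>" using \<theta>_c[of y] y SW by (auto simp: abs_mult)
    also have "\<dots> \<le> \<bar>y\<bar> * 2" using T_c[OF yT] by (intro mult_left_mono) auto
    finally have t1: "\<bar>\<theta> y\<bar> \<le> 2 * \<bar>y\<bar>" by simp
    have t2: "\<bar>\<theta> y\<bar> \<le> 1/2" using t1 ay r by linarith
    have "\<bar>\<theta> y\<bar> ^ 3 \<le> (1/2) ^ 3" using power_mono[OF t2 abs_ge_zero, of 3] .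
    then have t3: "\<bar>\<theta> y\<bar> ^ 3 \<le> 1/8" by (simp add: power_divide)
    have "\<bar>\<theta> y\<bar> ^ 3 * \<bar>\<theta> y\<bar> \<le> (1/8) * (2 * \<bar>y\<bar>)"
      by (rule mult_mono[OF t3 t1]) auto
    moreover have "\<bar>\<sigma> y\<bar> = \<bar>\<theta> y\<bar> ^ 3 * \<bar>\<theta> y\<bar>"
    proof -
      have "\<bar>\<sigma> y\<bar> = \<bar>\<theta> y\<bar> ^ 4" unfolding \<sigma>_def by (rule power_abs)
      also have "\<dots> = \<bar>\<theta> y\<bar> ^ 3 * \<bar>\<theta> y\<bar>" by algebra
      finally show ?thesis .
    qed
    ultimately have "\<bar>\<sigma> y\<bar> \<le> \<bar>y\<bar> / 4" by simp
    then have "\<bar>\<sigma> y\<bar> < r" using ay r by linarith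
    then show "z \<in> S" unfolding S_def z by simp
  qed
  have \<sigma>T: "smooth_on T \<sigma>" by (rule smooth_mono[OF \<sigma>_smooth TW])
  have s\<sigma>S: "smooth_on S \<sigma>" by (rule smooth_mono[OF \<sigma>_smooth SW])
  have d\<sigma>S: "\<bar>deriv \<sigma> y\<bar> \<le> 1/2" if "y \<in> S" for y using T_d\<sigma> that SK KT by blast
  have ubd: "bd S (\<lambda>n. \<sigma> ^^ n) k" if "1 \<le> k" for k
    by (rule iter_bd[OF oS oT cK SK KT \<sigma>T \<sigma>S, OF _ that]) (erule d\<sigma>S)
  have su: "smooth_on S (\<sigma> ^^ n)" for n using iter_props[OF oS s\<sigma>S \<sigma>S] by blast
  have uS: "(\<sigma> ^^ n) ` S \<subseteq> S" for n using iter_props[OF oS s\<sigma>S \<sigma>S] by blast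
  have uK: "(\<sigma> ^^ n) ` S \<subseteq> K" for n using uS SK by blast
  have uT: "(\<sigma> ^^ n) ` S \<subseteq> T" for n using uK KT by blast
  define h where "h = (\<lambda>y. ln (c y))"
  have cT: "c ` T \<subseteq> {0<..}" using T_c by force
  have h_smooth: "smooth_on T h" unfolding h_def
    by (rule smooth_comp[OF oT _ cT smooth_ln smooth_mono[OF c_smooth TW]]) simp
  have hbd: "bd S (\<lambda>n y. h ((\<sigma> ^^ n) y)) k" for k
    by (rule bd_comp[OF oS oT cK KT su uK h_smooth]) (erule ubd)
  have hs: "smooth_on S (\<lambda>y. h ((\<sigma> ^^ n) y))" for n
    by (rule smooth_comp[OF oS oT uT h_smooth su])
  define a where "a = (\<lambda>n x. (1 / 4 ^ n) * h ((\<sigma> ^^ n) x))"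
  have as: "smooth_on S (a n)" for n unfolding a_def by (rule smooth_cmult[OF oS hs])
  have aM: "\<exists>M. \<forall>n. \<forall>x\<in>S. \<bar>(deriv ^^ k) (a n) x\<bar> \<le> M * (1/4) ^ n" for k
  proof -
    obtain M where M: "\<forall>n. \<forall>x\<in>S. \<bar>(deriv ^^ k) (\<lambda>y. h ((\<sigma> ^^ n) y)) x\<bar> \<le> M"
      using hbd[of k] unfolding bd_def by blast
    have "\<bar>(deriv ^^ k) (a n) x\<bar> \<le> M * (1/4) ^ n" if x: "x \<in> S" for n x
    proof -
      have dsk: "ds k S (\<lambda>y. h ((\<sigma> ^^ n) y))" using hs[of n] unfolding smooth_ds by blast
      have "(deriv ^^ k) (a n) x = (1 / 4 ^ n) * (deriv ^^ k) (\<lambda>y. h ((\<sigma> ^^ n) y)) x"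
        unfolding a_def by (rule D_cmult[OF oS dsk x])
      then have "\<bar>(deriv ^^ k) (a n) x\<bar> = (1 / 4 ^ n) * \<bar>(deriv ^^ k) (\<lambda>y. h ((\<sigma> ^^ n) y)) x\<bar>"
        by (simp add: abs_mult)
      also have "\<dots> \<le> (1 / 4 ^ n) * M" using M x by (intro mult_left_mono) auto
      finally show ?thesis by (simp add: power_one_over)
    qed
    then show ?thesis by blast
  qed
  have F_smooth: "smooth_on S (\<lambda>x. \<Sum>n. a n x)"
    by (rule series_smooth[OF oS cvS as _ _ aM]) auto
  have summ: "summable (\<lambda>n. a n x)" if x: "x \<in> S" for x
  proof -
    obtain M where M: "\<forall>n. \<forall>x\<in>S. \<bar>(deriv ^^ 0) (a n) x\<bar> \<le> M * (1/4) ^ n" using aM by blast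
    have sm: "summable (\<lambda>n. M * (1/4::real) ^ n)"
      by (rule summable_mult) (rule summable_geometric, simp)
    show ?thesis by (rule summable_comparison_test'[OF sm, of 0]) (use M x in simp)
  qed
  have fac: "(\<lambda>n. c ((\<sigma> ^^ n) x) powr (1 / 4 ^ n)) = (\<lambda>n. exp (a n x))" if x: "x \<in> S" for x
  proof
    fix n
    have "(\<sigma> ^^ n) x \<in> T" using uT x by blast
    then have "c ((\<sigma> ^^ n) x) > 0" using T_c by force
    then show "c ((\<sigma> ^^ n) x) powr (1 / 4 ^ n) = exp (a n x)"
      by (simp add: powr_def a_def h_def)
  qed
  have eqf: "sqrt (prodinf (\<lambda>n. c ((\<sigma> ^^ n) x) powr (1 / 4 ^ n))) = exp ((1/2) * (\<Sum>n. a n x))"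
    if x: "x \<in> S" for x
  proof -
    define s where "s = (\<Sum>n. a n x)"
    have "prodinf (\<lambda>n. c ((\<sigma> ^^ n) x) powr (1 / 4 ^ n)) = exp s"
      unfolding fac[OF x] s_def by (rule prodinf_exp[OF summ[OF x]])
    also have "exp s = (exp ((1/2) * s))\<^sup>2"
      by (simp add: power2_eq_square exp_add[symmetric])
    finally show ?thesis unfolding s_def by simp
  qed
  have G_smooth: "smooth_on S (\<lambda>x. exp ((1/2) * (\<Sum>n. a n x)))"
    by (rule smooth_comp[OF oS open_UNIV _ smooth_exp smooth_cmult[OF oS F_smooth]]) simp
  have fin_smooth: "smooth_on S (\<lambda>x. sqrt (prodinf (\<lambda>n. c ((\<sigma> ^^ n) x) powr (1 / 4 ^ n))))"
    by (rule smooth_local[OF oS _ G_smooth]) (erule eqf)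
  have conv: "convergent_prod (\<lambda>n. c ((\<sigma> ^^ n) x) powr (1 / 4 ^ n))" if x: "x \<in> S" for x
    unfolding fac[OF x] by (rule convergent_prod_exp[OF summ[OF x]])
  have inW: "(\<sigma> ^^ n) x \<in> W" if "x \<in> S" for x n using uS that SW by blast
  have "open S \<and> 0 \<in> S \<and> S \<subseteq> W \<and> (\<forall>x\<in>S. \<forall>n. (\<sigma> ^^ n) x \<in> W) \<and>
        (\<forall>x\<in>S. convergent_prod (\<lambda>n. c ((\<sigma> ^^ n) x) powr (1 / 4 ^ n))) \<and>
        smooth_on S (\<lambda>x. sqrt (prodinf (\<lambda>n. c ((\<sigma> ^^ n) x) powr (1 / 4 ^ n))))"
    using oS r SW inW conv fin_smooth unfolding S_def by auto
  then show ?thesis unfolding \<sigma>_def by blast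
qed

end
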